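(* There is a deterministic Congested Clique algorithm which, on an input graph $G$ with arboricity $a\ge 2$, terminates within $O(a)$ rounds with every vertex knowing the entire edge set of $G$. Consequently, every problem whose solution is a computable function of the (unweighted) input graph $G$ can be solved deterministically in $O(a)$ rounds in the Congested Clique, with each vertex outputting its part of a common solution.
   Context: Congested Clique model: there are $n$ processors (vertices) with distinct IDs of $O(\log n)$ bits; computation proceeds in synchronous rounds; in each round every pair of vertices may exchange a message of $O(\log n)$ bits; local computation is unrestricted. The input is a graph $G=(V,E')$ on the same vertex set; each vertex initially knows its incident edges in $G$, and $a$ is known to all vertices. The arboricity of a graph is the minimum number of forests whose union covers its edge set. *)

theory Defs
  imports Main
begin

text \<open>Vertices are the processor IDs 0..n-1. A graph is given by an adjacency
  predicate E (symmetric, irreflexive, on vertex set {..<n}).\<close>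

definition simple_graph :: "nat \<Rightarrow> (nat \<Rightarrow> nat \<Rightarrow> bool) \<Rightarrow> bool" where
  "simple_graph n E \<longleftrightarrow> (\<forall>u v. E u v \<longrightarrow> u < n \<and> v < n \<and> u \<noteq> v \<and> E v u)"

definition graph_edges :: "(nat \<Rightarrow> nat \<Rightarrow> bool) \<Rightarrow> nat set set" where
  "graph_edges E = {{u, v} | u v. E u v}"

definition has_cycle :: "nat set set \<Rightarrow> bool" where
  "has_cycle F \<longleftrightarrow> (\<exists>vs. 3 \<le> length vs \<and> distinct vs \<and>
      (\<forall>i < length vs. {vs ! i, vs ! ((i + 1) mod length vs)} \<in> F))"

definition forest :: "nat set set \<Rightarrow> bool" where
  "forest F \<longleftrightarrow> (\<forall>e \<in> F. card e = 2) \<and> \<not> has_cycle F"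

definition arboricity :: "(nat \<Rightarrow> nat \<Rightarrow> bool) \<Rightarrow> nat" where
  "arboricity E = (LEAST k. \<exists>F :: nat \<Rightarrow> nat set set.
      (\<forall>i < k. forest (F i)) \<and> (\<Union>i < k. F i) = graph_edges E)"

text \<open>Local states are arbitrary finite data (encoded as lists of naturals);
  local computation is unrestricted (arbitrary HOL functions). Messages are
  natural numbers; the bandwidth restriction requires them to have O(log n) bits.
  All components may depend on n and a (known to all vertices) and on the
  vertex's own ID.\<close>

type_synonym cc_state = "nat list"

record cc_alg =
  cc_init  :: "nat \<Rightarrow> nat \<Rightarrow> nat \<Rightarrow> (nat \<Rightarrow> bool) \<Rightarrow> cc_state"
    \<comment> \<open>n, a, own ID, own adjacency \<open>\<mapsto>\<close> initial state\<close>
  cc_msg   :: "nat \<Rightarrow> nat \<Rightarrow> nat \<Rightarrow> cc_state \<Rightarrow> nat \<Rightarrow> nat"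
    \<comment> \<open>n, a, own ID, state, recipient \<open>\<mapsto>\<close> message\<close>
  cc_trans :: "nat \<Rightarrow> nat \<Rightarrow> nat \<Rightarrow> cc_state \<Rightarrow> (nat \<Rightarrow> nat) \<Rightarrow> cc_state"
    \<comment> \<open>n, a, own ID, state, received messages (by sender) \<open>\<mapsto>\<close> new state\<close>

text \<open>Bandwidth: every message sent between two vertices is below (n+2)^c,
  i.e. has at most c * log(n+2) = O(log n) bits, for a constant c.\<close>

definition cc_bandwidth :: "cc_alg \<Rightarrow> nat \<Rightarrow> bool" where
  "cc_bandwidth A c \<longleftrightarrow>
     (\<forall>n a v s w. v < n \<longrightarrow> w < n \<longrightarrow> cc_msg A n a v s w < (n + 2) ^ c)"

fun cc_run :: "cc_alg \<Rightarrow> nat \<Rightarrow> nat \<Rightarrow> (nat \<Rightarrow> nat \<Rightarrow> bool) \<Rightarrow> nat \<Rightarrow> nat \<Rightarrow> cc_state" where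
  "cc_run A n a E 0 = (\<lambda>v. cc_init A n a v (E v))"
| "cc_run A n a E (Suc r) = (\<lambda>v. cc_trans A n a v (cc_run A n a E r v)
      (\<lambda>u. if u < n then cc_msg A n a u (cc_run A n a E r u) v else 0))"

end

theory Submission
  imports Defs "HOL-Library.Countable"
begin


definition ispath :: "nat set set \<Rightarrow> nat set \<Rightarrow> nat list \<Rightarrow> bool" where
  "ispath F V p \<longleftrightarrow> p \<noteq> [] \<and> distinct p \<and> set p \<subseteq> V \<and>
     (\<forall>i. Suc i < length p \<longrightarrow> {p!i, p!Suc i} \<in> F)"

lemma mindeg_cycle:
  assumes fin: "finite V" and ne: "V \<noteq> {}" and c2: "\<forall>e\<in>F. card e = 2" and sub: "\<Union>F \<subseteq> V"
    and deg: "\<forall>x\<in>V. 2 \<le> card {e\<in>F. x\<in>e}"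
  shows "has_cycle F"
proof -
  obtain x where x: "x \<in> V" using ne by blast
  have "ispath F V [x]" using x by (simp add: ispath_def)
  moreover have "\<forall>p. ispath F V p \<longrightarrow> length p \<le> card V"
    by (metis card_mono distinct_card fin ispath_def)
  ultimately have "\<exists>k. (\<exists>p. ispath F V p \<and> length p = k) \<and> (\<forall>k'. (\<exists>p. ispath F V p \<and> length p = k') \<longrightarrow> k' \<le> k)"
    using Nat.ex_has_greatest_nat[of "\<lambda>k. \<exists>p. ispath F V p \<and> length p = k" 1 "card V"]
    by (metis length_Cons list.size(3) One_nat_def)
  then obtain k p where p: "ispath F V p" "length p = k" and km: "\<forall>k'. (\<exists>p. ispath F V p \<and> length p = k') \<longrightarrow> k' \<le> k"
    by blast
  have pmax: "\<And>q. ispath F V q \<Longrightarrow> length q \<le> length p" using km p by blast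
  define x0 where "x0 = p!0"
  have pne: "p \<noteq> []" and pd: "distinct p" and pV: "set p \<subseteq> V"
    and pe: "\<And>i. Suc i < length p \<Longrightarrow> {p!i, p!Suc i} \<in> F" using p by (auto simp: ispath_def)
  have x0V: "x0 \<in> V" using pne pV x0_def by (simp add: subset_iff)
  have "2 \<le> card {e\<in>F. x0\<in>e}" using deg x0V by blast
  then have fS: "finite {e\<in>F. x0\<in>e}" by (metis card.infinite not_numeral_le_zero)
  obtain e1 where e1': "e1 \<in> {e\<in>F. x0\<in>e}" using \<open>2 \<le> card {e\<in>F. x0\<in>e}\<close>
    by (metis card.empty ex_in_conv not_numeral_le_zero)
  have "card ({e\<in>F. x0\<in>e} - {e1}) \<ge> 1" using \<open>2 \<le> card {e\<in>F. x0\<in>e}\<close> e1' fS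
    by (simp add: card_Diff_singleton)
  then obtain e2 where e2': "e2 \<in> {e\<in>F. x0\<in>e} - {e1}"
    by (metis card.empty ex_in_conv not_one_le_zero)
  have e1: "e1 \<in> F" "x0 \<in> e1" and e2: "e2 \<in> F" "x0 \<in> e2" and e12: "e1 \<noteq> e2"
    using e1' e2' by auto
  obtain y1 where y1: "e1 = {x0, y1}" "y1 \<noteq> x0"
    using c2 e1 by (metis card_2_iff insert_commute insert_iff singletonD)
  obtain y2 where y2: "e2 = {x0, y2}" "y2 \<noteq> x0"
    using c2 e2 by (metis card_2_iff insert_commute insert_iff singletonD)
  have "y1 \<noteq> y2" using y1 y2 e12 by blast
  define y where "y = (if Suc 0 < length p \<and> y1 = p!1 then y2 else y1)"
  have yF: "{x0, y} \<in> F" using y_def y1 y2 e1 e2 by auto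
  have yx0: "y \<noteq> x0" using y_def y1 y2 by auto
  have y1p: "Suc 0 < length p \<longrightarrow> y \<noteq> p!1" using y_def \<open>y1 \<noteq> y2\<close> by auto
  have yV: "y \<in> V" using yF sub by blast
  have "y \<in> set p"
  proof (rule ccontr)
    assume nin: "y \<notin> set p"
    have "ispath F V (y # p)"
      unfolding ispath_def
    proof (intro conjI allI impI)
      show "distinct (y#p)" using nin pd by simp
      show "set (y#p) \<subseteq> V" using yV pV by simp
    next
      fix i assume "Suc i < length (y#p)"
      then show "{(y#p)!i, (y#p)!Suc i} \<in> F"
        using pe yF x0_def by (cases i) (auto simp: insert_commute)
    qed simp
    then show False using pmax[of "y#p"] by simp
  qed
  then obtain i where i: "i < length p" "p!i = y" by (metis in_set_conv_nth)
  have i2: "2 \<le> i"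
  proof -
    have "i \<noteq> 0"
    proof
      assume "i = 0" then show False using i yx0 x0_def by simp
    qed
    moreover have "i \<noteq> 1" using i y1p by auto
    ultimately show ?thesis by linarith
  qed
  define vs where "vs = take (Suc i) p"
  have lvs: "length vs = Suc i" using i vs_def by simp
  show ?thesis unfolding has_cycle_def
  proof (intro exI[of _ vs] conjI allI impI)
    show "3 \<le> length vs" using lvs i2 by simp
    show "distinct vs" using pd vs_def by simp
  next
    fix l assume l: "l < length vs"
    show "{vs ! l, vs ! ((l + 1) mod length vs)} \<in> F"
    proof (cases "l = i")
      case True
      then have "(l+1) mod length vs = 0" using lvs by simp
      then show ?thesis using True yF i vs_def x0_def lvs by (auto simp: insert_commute)
    next
      case False
      then have "Suc l < Suc i" using l lvs by simp
      then have "(l+1) mod length vs = Suc l" using lvs by simp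
      moreover have "Suc l < length p" using \<open>Suc l < Suc i\<close> i by simp
      ultimately show ?thesis using pe[of l] vs_def \<open>Suc l < Suc i\<close> by simp
    qed
  qed
qed

lemma has_cycle_mono: "has_cycle F' \<Longrightarrow> F' \<subseteq> F \<Longrightarrow> has_cycle F"
  unfolding has_cycle_def by blast

lemma forest_card:
  assumes "finite V" "forest F" "\<Union>F \<subseteq> V"
  shows "card F \<le> card V"
  using assms
proof (induction "card V" arbitrary: V F rule: less_induct)
  case less
  have c2: "\<forall>e\<in>F. card e = 2" and nc: "\<not> has_cycle F" using less.prems by (auto simp: forest_def)
  have finF: "finite F" using less.prems(1,3)
    by (meson Pow_iff Sup_le_iff finite_Pow_iff rev_finite_subset subsetI)
  show ?case
  proof (cases "\<exists>x\<in>V. card {e\<in>F. x\<in>e} \<le> 1")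
    case True
    then obtain x where x: "x \<in> V" "card {e\<in>F. x\<in>e} \<le> 1" by blast
    define F' where "F' = {e\<in>F. x \<notin> e}"
    have "forest F'" using less.prems(2) has_cycle_mono[of F' F] unfolding forest_def F'_def by blast
    moreover have "\<Union>F' \<subseteq> V - {x}" using less.prems(3) F'_def by blast
    moreover have "card (V - {x}) < card V" using x less.prems(1) by (metis card_Diff1_less)
    ultimately have "card F' \<le> card (V - {x})" using less.hyps[of "V - {x}" F'] less.prems(1) by simp
    moreover have "F = F' \<union> {e\<in>F. x\<in>e}" using F'_def by blast
    then have "card F \<le> card F' + card {e\<in>F. x\<in>e}" using card_Un_le[of F' "{e\<in>F. x\<in>e}"] by simp
    moreover have "card (V - {x}) = card V - 1" using x less.prems(1) by simp
    moreover have "card V \<ge> 1" using x less.prems(1) by (metis One_nat_def Suc_leI card_gt_0_iff empty_iff)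
    ultimately show ?thesis using x by linarith
  next
    case False
    show ?thesis
    proof (cases "V = {}")
      case True
      then have "F = {}" using less.prems(3) c2 by (metis Sup_le_iff card.empty ex_in_conv subset_empty zero_neq_numeral)
      then show ?thesis by simp
    next
      case ne: False
      have "has_cycle F" using mindeg_cycle[OF less.prems(1) ne c2 less.prems(3)] False by force
      then show ?thesis using nc by blast
    qed
  qed
qed



lemma edges_sub: "simple_graph n E \<Longrightarrow> graph_edges E \<subseteq> Pow {..<n}"
  unfolding simple_graph_def graph_edges_def by auto

lemma edges_fin: "simple_graph n E \<Longrightarrow> finite (graph_edges E)"
  by (meson edges_sub finite_Pow_iff finite_lessThan rev_finite_subset)

lemma single_forest: "e \<in> graph_edges E \<Longrightarrow> simple_graph n E \<Longrightarrow> forest {e}"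
proof -
  assume e: "e \<in> graph_edges E" and sg: "simple_graph n E"
  then obtain u v where uv: "e = {u,v}" "u \<noteq> v" unfolding graph_edges_def simple_graph_def by blast
  have "card e = 2" using uv by simp
  moreover have "\<not> has_cycle {e}"
  proof
    assume "has_cycle {e}"
    then obtain vs where vs: "3 \<le> length vs" "distinct vs"
      "\<forall>i < length vs. {vs ! i, vs ! ((i + 1) mod length vs)} \<in> {e}" unfolding has_cycle_def by blast
    have "vs \<noteq> []" using vs(1) by auto
    then have "{vs!0, vs!1} = e" using vs(1) vs(3)[rule_format, of 0] by simp
    moreover have "{vs!1, vs!2} = e" using vs(1) vs(3)[rule_format, of 1] by (simp add: numeral_2_eq_2)
    ultimately have "{vs!0, vs!1} = {vs!1, vs!2}" by simp
    moreover have "vs!0 \<noteq> vs!2" using vs(1,2) \<open>vs \<noteq> []\<close> nth_eq_iff_index_eq[of vs 0 2] by simp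
    moreover have "vs!0 \<noteq> vs!1" using vs(1,2) \<open>vs \<noteq> []\<close> nth_eq_iff_index_eq[of vs 0 1] by simp
    ultimately show False by (auto simp: doubleton_eq_iff)
  qed
  ultimately show "forest {e}" unfolding forest_def by simp
qed

lemma edges_bound:
  assumes sg: "simple_graph n E" and ar: "arboricity E = a"
  shows "card (graph_edges E) \<le> a * n"
proof -
  obtain xs where xs: "set xs = graph_edges E" using edges_fin[OF sg] finite_list by blast
  have ex: "\<exists>F :: nat \<Rightarrow> nat set set. (\<forall>i < length xs. forest (F i)) \<and> (\<Union>i < length xs. F i) = graph_edges E"
  proof (intro exI[of _ "\<lambda>i. {xs!i}"] conjI allI impI)
    fix i assume "i < length xs" then show "forest {xs!i}" using single_forest[OF _ sg] xs nth_mem by blast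
  next
    show "(\<Union>i < length xs. {xs!i}) = graph_edges E" unfolding xs[symmetric] by (auto simp: set_conv_nth)
  qed
  have "\<exists>F :: nat \<Rightarrow> nat set set. (\<forall>i < a. forest (F i)) \<and> (\<Union>i < a. F i) = graph_edges E"
    using LeastI_ex[of "\<lambda>k. \<exists>F :: nat \<Rightarrow> nat set set. (\<forall>i < k. forest (F i)) \<and> (\<Union>i < k. F i) = graph_edges E"] ex ar
    unfolding arboricity_def by blast
  then obtain F where F: "\<forall>i < a. forest (F i)" "(\<Union>i < a. F i) = graph_edges E" by blast
  have "card (graph_edges E) \<le> (\<Sum>i<a. card (F i))" using F(2) card_UN_le[of "{..<a}" F] by simp
  also have "\<dots> \<le> (\<Sum>i<a. n)"
  proof (rule sum_mono)
    fix i assume i: "i \<in> {..<a}"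
    have "\<Union>(F i) \<subseteq> {..<n}" using F(2) edges_sub[OF sg] i by blast
    then show "card (F i) \<le> n" using forest_card[of "{..<n}" "F i"] F(1) i by simp
  qed
  finally show ?thesis by (simp add: mult.commute)
qed

lemma degsum:
  assumes sg: "simple_graph n E"
  shows "(\<Sum>x<n. card {y. y<n \<and> E x y}) \<le> 2 * card (graph_edges E)"
proof -
  define S where "S = (\<Union>e\<in>graph_edges E. {(x,y). {x,y} = e \<and> E x y})"
  have "(\<Sum>x<n. card {y. y<n \<and> E x y}) = card (SIGMA x:{..<n}. {y. y<n \<and> E x y})"
    by (rule card_SigmaI[symmetric]) auto
  also have "\<dots> \<le> card S"
  proof (rule card_mono)
    show "finite S"
    proof (rule finite_subset[of _ "{..<n} \<times> {..<n}"])
      show "S \<subseteq> {..<n} \<times> {..<n}"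
        using sg unfolding simple_graph_def S_def by blast
    qed simp
    show "(SIGMA x:{..<n}. {y. y<n \<and> E x y}) \<subseteq> S"
      unfolding graph_edges_def S_def by blast
  qed
  also have "\<dots> \<le> (\<Sum>e\<in>graph_edges E. card {(x,y). {x,y} = e \<and> E x y})"
    unfolding S_def by (rule card_UN_le) (rule edges_fin[OF sg])
  also have "\<dots> \<le> (\<Sum>e\<in>graph_edges E. 2)"
  proof (rule sum_mono)
    fix e assume "e \<in> graph_edges E"
    then obtain u v where e: "e = {u,v}" unfolding graph_edges_def by blast
    have "{(x,y). {x,y} = e \<and> E x y} \<subseteq> {(u,v),(v,u)}" using e by (auto simp: doubleton_eq_iff)
    then have "card {(x,y). {x,y} = e \<and> E x y} \<le> card {(u,v),(v,u)}" by (rule card_mono[rotated]) simp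
    also have "\<dots> \<le> 2" by (cases "u = v") auto
    finally show "card {(x,y). {x,y} = e \<and> E x y} \<le> 2" .
  qed
  finally show ?thesis by simp
qed


type_synonym ast = "nat \<times> nat \<times> nat list \<times> nat list list"

definition enc :: "ast \<Rightarrow> cc_state" where "enc x = [to_nat x]"
definition dec :: "cc_state \<Rightarrow> ast" where "dec s = from_nat (hd s)"
lemma dec_enc[simp]: "dec (enc x) = x" by (simp add: enc_def dec_def)

definition nbl :: "nat \<Rightarrow> (nat \<Rightarrow> bool) \<Rightarrow> nat list" where
  "nbl n adj = sorted_list_of_set {u. u < n \<and> adj u}"

definition msgf :: "nat \<Rightarrow> nat \<Rightarrow> nat \<Rightarrow> ast \<Rightarrow> nat \<Rightarrow> nat" where
  "msgf n a u st w = (case st of (v', a', nb, hist) \<Rightarrow>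
     (let t = length hist in
      if t = 0 then length nb
      else if t \<le> 2*a then
        (let off = sum_list (take u (hist!0)); j = (t-1)*n + w in
          if off \<le> j \<and> j < off + length nb then nb!(j-off) + 1 else 0)
      else if t \<le> 4*a then sum_list (hist!(t - 2*a))
      else 0))"

definition alg :: cc_alg where
  "alg = \<lparr> cc_init = (\<lambda>n a v adj. enc (v, a, nbl n adj, [])),
           cc_msg = (\<lambda>n a u s w. min (msgf n a u (dec s) w) (n+1)),
           cc_trans = (\<lambda>n a v s m. (case dec s of (v', a', nb, hist) \<Rightarrow>
                        enc (v', a', nb, hist @ [map m [0..<n]]))) \<rparr>"

definition knowf :: "ast \<Rightarrow> nat \<Rightarrow> nat \<Rightarrow> bool" where
  "knowf st x y = (case st of (v, a, nb, hist) \<Rightarrow>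
     (let d = hist!0; n = length d in x < n \<and>
       (\<exists>k < d!x. hist ! (2*a + 1 + (sum_list (take x d) + k) div n) ! ((sum_list (take x d) + k) mod n) = y + 1)))"

lemma trans_simp: "cc_trans alg n a v (enc (v', a', nb, h)) m = enc (v', a', nb, h @ [map m [0..<n]])"
  by (simp add: alg_def)
lemma msg_simp: "cc_msg alg n a u s w = min (msgf n a u (dec s) w) (n+1)"
  by (simp add: alg_def)

lemma bandwidth: "cc_bandwidth alg 1"
  unfolding cc_bandwidth_def alg_def by (auto simp: min_def)

locale run =
  fixes n a :: nat and E :: "nat \<Rightarrow> nat \<Rightarrow> bool"
begin

definition deg where "deg x = length (nbl n (E x))"
definition off where "off x = (\<Sum>i<x. deg i)"
definition pitem where "pitem t x w = (let j = (t-1)*n+w in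
   if off x \<le> j \<and> j < off x + deg x then nbl n (E x) ! (j - off x) + 1 else 0)"
definition raw where "raw t u w = (if t = 0 then deg u else if t \<le> 2*a then pitem t u w
   else if t \<le> 4*a then sum_list (map (\<lambda>x. pitem (t - 2*a) x u) [0..<n]) else 0)"
definition idmsg where "idmsg t u w = min (raw t u w) (n+1)"
definition rows where "rows w r = map (\<lambda>t. map (\<lambda>x. idmsg t x w) [0..<n]) [0..<r]"

lemma set_nbl: "set (nbl n adj) = {u. u < n \<and> adj u}"
  unfolding nbl_def by simp

lemma deg_le: "deg x \<le> n"
proof -
  have "deg x = card {u. u < n \<and> E x u}" unfolding deg_def nbl_def by simp
  also have "\<dots> \<le> card {..<n}" by (rule card_mono) auto
  finally show ?thesis by simp
qed

lemma nbl_lt: "k < deg x \<Longrightarrow> nbl n (E x) ! k < n"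
proof -
  assume "k < deg x"
  then have "nbl n (E x) ! k \<in> set (nbl n (E x))" unfolding deg_def by simp
  then show ?thesis using set_nbl[of "E x"] by auto
qed

lemma pitem_le: "pitem t x w \<le> n"
  unfolding pitem_def Let_def using nbl_lt by (auto simp: Suc_le_eq)

lemma idmsg0: "idmsg 0 y x = deg y"
  unfolding idmsg_def raw_def using deg_le[of y] by simp

lemma idmsg1: "1 \<le> t \<Longrightarrow> t \<le> 2*a \<Longrightarrow> idmsg t y x = pitem t y x"
  unfolding idmsg_def raw_def using pitem_le[of t y x] by simp

lemma rows_0[simp]: "rows w 0 = []" unfolding rows_def by simp

lemma rows_Nil[simp]: "rows w r = [] \<longleftrightarrow> r = 0" unfolding rows_def by simp

lemma length_rows[simp]: "length (rows w r) = r" unfolding rows_def by simp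

lemma rows_nth: "t < r \<Longrightarrow> rows w r ! t = map (\<lambda>x. idmsg t x w) [0..<n]"
  unfolding rows_def by simp

lemma off_take: "x \<le> n \<Longrightarrow> sum_list (take x (map deg [0..<n])) = off x"
proof -
  assume "x \<le> n"
  then have "take x (map deg [0..<n]) = map deg [0..<x]" by (simp add: take_map)
  then show ?thesis unfolding off_def by (simp add: sum_list_map_eq_sum_count2 atLeast0LessThan[symmetric] sum_set_upt_conv_sum_list_nat[symmetric])
qed

lemma msgf_ideal:
  assumes x: "x < n"
  shows "msgf n a x (x, a, nbl n (E x), rows x r) u = raw r x u"
proof -
  consider "r = 0" | "1 \<le> r \<and> r \<le> 2*a" | "2*a < r \<and> r \<le> 4*a" | "4*a < r" by linarith
  then show ?thesis
  proof cases
    case 1 then show ?thesis unfolding msgf_def raw_def deg_def by simp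
  next
    case 2
    have h0: "rows x r ! 0 = map deg [0..<n]" using 2 rows_nth[of 0 r x] idmsg0 by simp
    show ?thesis using 2 x h0
      by (simp add: msgf_def raw_def off_take pitem_def Let_def deg_def)
  next
    case 3
    have "rows x r ! (r - 2*a) = map (\<lambda>y. idmsg (r - 2*a) y x) [0..<n]" using 3 rows_nth by simp
    also have "\<dots> = map (\<lambda>y. pitem (r - 2*a) y x) [0..<n]" proof -
      have "1 \<le> r - 2*a" "r - 2*a \<le> 2*a" using 3 by auto
      then show ?thesis using idmsg1[of "r - 2*a"] by simp
    qed
    finally show ?thesis using 3 unfolding msgf_def raw_def by simp
  next
    case 4 then show ?thesis unfolding msgf_def raw_def by simp
  qed
qed

lemma run_state: "u < n \<Longrightarrow> cc_run alg n a E r u = enc (u, a, nbl n (E u), rows u r)"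
proof (induction r arbitrary: u)
  case 0 then show ?case by (simp add: alg_def rows_def)
next
  case (Suc r)
  have m: "map (\<lambda>x. if x < n then cc_msg alg n a x (cc_run alg n a E r x) u else 0) [0..<n]
      = map (\<lambda>x. idmsg r x u) [0..<n]"
    using Suc.IH msgf_ideal by (simp add: msg_simp idmsg_def)
  have "cc_run alg n a E (Suc r) u = cc_trans alg n a u (cc_run alg n a E r u)
     (\<lambda>x. if x < n then cc_msg alg n a x (cc_run alg n a E r x) u else 0)" by simp
  also have "\<dots> = enc (u, a, nbl n (E u), rows u r @ [map (\<lambda>x. idmsg r x u) [0..<n]])"
    using Suc.IH[OF Suc.prems] m by (simp only: trans_simp)
  also have "rows u r @ [map (\<lambda>x. idmsg r x u) [0..<n]] = rows u (Suc r)" unfolding rows_def by simp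
  finally show ?case .
qed

lemma off_Suc: "off (Suc x) = off x + deg x" unfolding off_def by simp

lemma off_mono: "x \<le> y \<Longrightarrow> off x \<le> off y"
  unfolding off_def by (rule sum_mono2) auto

lemma uniq:
  assumes k: "k < deg x" and l: "off y \<le> off x + k" "off x + k < off y + deg y"
  shows "y = x"
proof (rule ccontr)
  assume "y \<noteq> x"
  then consider "y < x" | "x < y" by linarith
  then show False
  proof cases
    case 1
    then have "off (Suc y) \<le> off x" by (intro off_mono) simp
    then show False using l off_Suc[of y] by simp
  next
    case 2
    then have "off (Suc x) \<le> off y" by (intro off_mono) simp
    then show False using l k off_Suc[of x] by simp
  qed
qed

lemma sum_pitem:
  assumes x: "x < n" and k: "k < deg x" and j: "(t - 1) * n + w = off x + k"
  shows "sum_list (map (\<lambda>y. pitem t y w) [0..<n]) = nbl n (E x) ! k + 1"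
proof -
  have "sum_list (map (\<lambda>y. pitem t y w) [0..<n]) = (\<Sum>y<n. pitem t y w)"
    by (simp add: sum_set_upt_conv_sum_list_nat[symmetric] atLeast0LessThan)
  also have "\<dots> = pitem t x w + (\<Sum>y\<in>{..<n} - {x}. pitem t y w)"
    using x by (simp add: sum.remove)
  also have "(\<Sum>y\<in>{..<n} - {x}. pitem t y w) = 0"
  proof (rule sum.neutral, intro ballI)
    fix y assume y: "y \<in> {..<n} - {x}"
    show "pitem t y w = 0"
    proof (rule ccontr)
      assume "pitem t y w \<noteq> 0"
      then have "off y \<le> off x + k" "off x + k < off y + deg y"
        unfolding pitem_def Let_def j by (auto split: if_splits)
      then have "y = x" using uniq k by blast
      then show False using y by simp
    qed
  qed
  also have "pitem t x w = nbl n (E x) ! k + 1" unfolding pitem_def Let_def j using k by simp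
  finally show ?thesis by simp
qed

end

lemma T_bound:
  assumes sg: "simple_graph n E" and ar: "arboricity E = a"
  shows "run.off n E n \<le> 2 * a * n"
proof -
  have "run.off n E n = (\<Sum>x<n. card {y. y<n \<and> E x y})"
    unfolding run.off_def run.deg_def nbl_def by simp
  also have "\<dots> \<le> 2 * card (graph_edges E)" by (rule degsum[OF sg])
  also have "\<dots> \<le> 2 * (a * n)" using edges_bound[OF sg ar] by simp
  finally show ?thesis by simp
qed

lemma know_correct:
  assumes sg: "simple_graph n E" and ar: "arboricity E = a" and a2: "2 \<le> a" and w: "w < n"
  shows "knowf (dec (cc_run alg n a E (5*a) w)) = E"
proof (intro ext)
  fix x y
  interpret run n a E .
  define hist where "hist = rows w (5*a)"
  have st: "dec (cc_run alg n a E (5*a) w) = (w, a, nbl n (E w), hist)"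
    using run_state[OF w] hist_def by simp
  have h0: "hist ! 0 = map deg [0..<n]" using a2 rows_nth[of 0 "5*a" w] idmsg0 hist_def by simp
  have np: "0 < n" using w by simp
  have key: "(\<exists>k < deg x. hist ! (2*a + 1 + (off x + k) div n) ! ((off x + k) mod n) = y + 1)
        \<longleftrightarrow> (\<exists>k < deg x. nbl n (E x) ! k = y)" if x: "x < n"
  proof -
    have "hist ! (2*a + 1 + (off x + k) div n) ! ((off x + k) mod n) = nbl n (E x) ! k + 1"
      if k: "k < deg x" for k
    proof -
      define j where "j = off x + k"
      have "j < off (Suc x)" using k off_Suc j_def by simp
      also have "\<dots> \<le> off n" using x by (intro off_mono) simp
      also have "\<dots> \<le> 2 * a * n" using T_bound[OF sg ar] by simp
      finally have "j div n < 2 * a" using np by (simp add: less_mult_imp_div_less)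
      define t where "t = 2*a + 1 + j div n"
      have t: "t < 5*a" "2*a < t" "t \<le> 4*a" using \<open>j div n < 2 * a\<close> t_def by auto
      have jm: "j mod n < n" using np by simp
      have "hist ! t ! (j mod n) = idmsg t (j mod n) w" using t rows_nth[of t "5*a" w] jm hist_def by simp
      also have "\<dots> = min (sum_list (map (\<lambda>y. pitem (t - 2*a) y (j mod n)) [0..<n])) (n+1)"
        unfolding idmsg_def raw_def using t by simp
      also have "sum_list (map (\<lambda>y. pitem (t - 2*a) y (j mod n)) [0..<n]) = nbl n (E x) ! k + 1"
        by (rule sum_pitem[OF x k]) (simp add: t_def j_def[symmetric])
      also have "min (nbl n (E x) ! k + 1) (n+1) = nbl n (E x) ! k + 1" using nbl_lt[OF k] by simp
      finally show ?thesis using t_def j_def by simp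
    qed
    then show ?thesis by auto
  qed
  show "knowf (dec (cc_run alg n a E (5*a) w)) x y = E x y"
  proof (cases "x < n")
    case True
    have "knowf (dec (cc_run alg n a E (5*a) w)) x y \<longleftrightarrow> (\<exists>k < deg x. nbl n (E x) ! k = y)"
      unfolding st knowf_def using True h0 key[OF True] by (simp add: off_take)
    also have "\<dots> \<longleftrightarrow> y \<in> set (nbl n (E x))" unfolding deg_def by (auto simp: in_set_conv_nth)
    also have "\<dots> \<longleftrightarrow> E x y" using sg unfolding set_nbl simple_graph_def by auto
    finally show ?thesis .
  next
    case False
    then show ?thesis unfolding st knowf_def using h0 sg unfolding simple_graph_def by auto
  qed
qed

lemma len0:
  assumes a2: "2 \<le> a" and v: "v < n"
  shows "dec (cc_run alg n a E (5*a) v) = (v, a, nbl n (E v), run.rows n a E v (5*a))"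
    "length (run.rows n a E v (5*a) ! 0) = n"
  using run.run_state[OF v, where a=a and E=E and r="5*a"] a2 by (simp_all add: run.rows_nth)

theorem mainTheorem7:
  shows "(\<exists>(A :: cc_alg) (c :: nat) (C :: nat) (R :: nat \<Rightarrow> nat \<Rightarrow> nat)
            (know :: cc_state \<Rightarrow> nat \<Rightarrow> nat \<Rightarrow> bool).
           cc_bandwidth A c \<and> (\<forall>n a. R n a \<le> C * a) \<and>
           (\<forall>n E a. simple_graph n E \<longrightarrow> arboricity E = a \<longrightarrow> 2 \<le> a \<longrightarrow>
              (\<forall>v < n. know (cc_run A n a E (R n a) v) = E)))
       \<and> (\<forall>P :: nat \<Rightarrow> (nat \<Rightarrow> nat \<Rightarrow> bool) \<Rightarrow> nat \<Rightarrow> 'o.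
           \<exists>(A :: cc_alg) (c :: nat) (C :: nat) (R :: nat \<Rightarrow> nat \<Rightarrow> nat)
            (out :: cc_state \<Rightarrow> 'o).
           cc_bandwidth A c \<and> (\<forall>n a. R n a \<le> C * a) \<and>
           (\<forall>n E a. simple_graph n E \<longrightarrow> arboricity E = a \<longrightarrow> 2 \<le> a \<longrightarrow>
              (\<forall>v < n. out (cc_run A n a E (R n a) v) = P n E v)))"
proof (intro conjI allI)
  show "\<exists>(A :: cc_alg) (c :: nat) (C :: nat) (R :: nat \<Rightarrow> nat \<Rightarrow> nat)
            (know :: cc_state \<Rightarrow> nat \<Rightarrow> nat \<Rightarrow> bool).
           cc_bandwidth A c \<and> (\<forall>n a. R n a \<le> C * a) \<and>
           (\<forall>n E a. simple_graph n E \<longrightarrow> arboricity E = a \<longrightarrow> 2 \<le> a \<longrightarrow>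
              (\<forall>v < n. know (cc_run A n a E (R n a) v) = E))"
    apply (rule exI[of _ alg], rule exI[of _ 1], rule exI[of _ 5], rule exI[of _ "\<lambda>n a. 5*a"], rule exI[of _ "\<lambda>s. knowf (dec s)"])
    using bandwidth know_correct by auto
next
  fix P :: "nat \<Rightarrow> (nat \<Rightarrow> nat \<Rightarrow> bool) \<Rightarrow> nat \<Rightarrow> 'o"
  show "\<exists>(A :: cc_alg) (c :: nat) (C :: nat) (R :: nat \<Rightarrow> nat \<Rightarrow> nat)
            (out :: cc_state \<Rightarrow> 'o).
           cc_bandwidth A c \<and> (\<forall>n a. R n a \<le> C * a) \<and>
           (\<forall>n E a. simple_graph n E \<longrightarrow> arboricity E = a \<longrightarrow> 2 \<le> a \<longrightarrow>
              (\<forall>v < n. out (cc_run A n a E (R n a) v) = P n E v))"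
  proof -
    define out where "out = (\<lambda>s. case dec s of (v, a, nb, hist) \<Rightarrow> P (length (hist!0)) (knowf (dec s)) v)"
    have "\<forall>n E a. simple_graph n E \<longrightarrow> arboricity E = a \<longrightarrow> 2 \<le> a \<longrightarrow>
              (\<forall>v < n. out (cc_run alg n a E (5*a) v) = P n E v)"
    proof (intro allI impI)
      fix n E a v assume sg: "simple_graph n E" and ar: "arboricity E = a" and a2: "2 \<le> a" and v: "v < n"
      have k: "knowf (dec (cc_run alg n a E (5*a) v)) = E" by (rule know_correct[OF sg ar a2 v])
      show "out (cc_run alg n a E (5*a) v) = P n E v"
        unfolding out_def k using len0[OF a2 v, of E] by simp
    qed
    note h = this
    show ?thesis
      apply (rule exI[of _ alg], rule exI[of _ 1], rule exI[of _ 5], rule exI[of _ "\<lambda>n a. 5*a"], rule exI[of _ out])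
      using bandwidth h by auto
  qed
qed

end
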